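(* Let $\Sigma$ be a finite set of primes, $k$ a positive integer, and $a_1,\ldots,a_k,b_1,\ldots,b_k\in\mathbb{Z}$ with $a_i\neq0$, $\gcd(a_i,b_i)=1$, $a_ib_j-a_jb_i\neq0$ ($i<j$), such that $(2k)!\prod_i a_i\prod_{i<j}(a_ib_j-a_jb_i)$ is a $\Sigma$-unit. Let $M=\max\{|a_1|,\ldots,|a_k|,|b_1|,\ldots,|b_k|\}$. Then for real $x\ge z\ge2$, the set $\Omega(x,z)$ has at most $$kM\frac{x+1}{z-1}+k\sqrt{Mx+M}$$ elements $n$ such that $L_i(n)$ is not $\Sigma$-square-free for some $i\in\{1,\ldots,k\}$.
   Context: An integer is a $\Sigma$-unit if all its prime divisors lie in $\Sigma$; it is $\Sigma$-square-free if it is a product of a $\Sigma$-unit and a square-free integer. $P_\Sigma(z)=\prod_{p<z,\,p\notin\Sigma}p$. $L_i(n)=a_in+b_i$. $\Omega(x,z)=\{n\in\mathbb{Z}:1\le n\le x,\ \gcd(L_1(n)\cdots L_k(n),P_\Sigma(z))=1\}$. *)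

theory Defs
  imports Complex_Main "HOL-Computational_Algebra.Computational_Algebra"
begin

definition sigma_unit :: "int set \<Rightarrow> int \<Rightarrow> bool" where
  "sigma_unit \<Sigma> m \<longleftrightarrow> (\<forall>p::int. prime p \<and> p dvd m \<longrightarrow> p \<in> \<Sigma>)"

definition sigma_squarefree :: "int set \<Rightarrow> int \<Rightarrow> bool" where
  "sigma_squarefree \<Sigma> m \<longleftrightarrow> (\<exists>u s. sigma_unit \<Sigma> u \<and> squarefree s \<and> m = u * s)"

definition P_sigma :: "int set \<Rightarrow> real \<Rightarrow> int" where
  "P_sigma \<Sigma> z = (\<Prod>{p::int. prime p \<and> real_of_int p < z \<and> p \<notin> \<Sigma>})"

definition Omega :: "int set \<Rightarrow> nat \<Rightarrow> (nat \<Rightarrow> int) \<Rightarrow> (nat \<Rightarrow> int) \<Rightarrow> real \<Rightarrow> real \<Rightarrow> int set" where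
  "Omega \<Sigma> k a b x z = {n::int. 1 \<le> n \<and> real_of_int n \<le> x \<and>
      gcd (\<Prod>i\<in>{1..k}. a i * n + b i) (P_sigma \<Sigma> z) = 1}"

end

theory Submission
  imports Defs
begin

lemma sqfree_crit:
  fixes m :: int
  assumes "\<forall>p::int. prime p \<and> p^2 dvd m \<longrightarrow> p \<in> \<Sigma>"
  shows "sigma_squarefree \<Sigma> m"
proof -
  have "sigma_unit \<Sigma> (square_part m ^ 2)"
    unfolding sigma_unit_def
  proof (intro allI impI)
    fix q :: int assume q: "prime q \<and> q dvd square_part m ^ 2"
    then have "q dvd square_part m" using prime_dvd_power by blast
    then have "q^2 dvd m" using dvd_square_part_iff by blast
    then show "q \<in> \<Sigma>" using assms q by blast
  qed
  moreover have "m = square_part m ^ 2 * squarefree_part m"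
    using squarefree_decompose[of m] by (simp add: mult.commute)
  ultimately show ?thesis unfolding sigma_squarefree_def
    using squarefree_squarefree_part by blast
qed

lemma card_cong_le:
  fixes S :: "int set" and q N :: int
  assumes "S \<subseteq> {1..N}" "q > 0" "\<forall>n\<in>S. \<forall>n'\<in>S. q dvd (n - n')" "N \<ge> 0"
  shows "real (card S) \<le> real_of_int N / real_of_int q + 1"
proof (cases "S = {}")
  case True
  then show ?thesis using assms by simp
next
  case False
  have fin: "finite S" using assms(1) finite_subset by blast
  define m where "m = Min S"
  have mS: "m \<in> S" using fin False m_def by simp
  have m1: "m \<ge> 1" using mS assms(1) by auto
  define f where "f n = (n - m) div q" for n
  have eq: "n - m = q * f n" if "n \<in> S" for n
    using assms(3) that mS unfolding f_def by auto
  have inj: "inj_on f S"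
  proof (rule inj_onI)
    fix n n' assume "n \<in> S" "n' \<in> S" "f n = f n'"
    then show "n = n'" using eq[of n] eq[of n'] by simp
  qed
  have img: "f ` S \<subseteq> {0..(N - 1) div q}"
  proof
    fix y assume "y \<in> f ` S"
    then obtain n where n: "n \<in> S" "y = f n" by auto
    have nN: "n \<le> N" using n assms(1) by auto
    have mn: "m \<le> n" using n fin m_def by simp
    have "0 \<le> (n - m) div q" using mn assms(2) by (simp add: pos_imp_zdiv_nonneg_iff)
    moreover have "(n - m) div q \<le> (N - 1) div q"
      using nN m1 assms(2) by (intro zdiv_mono1) auto
    ultimately show "y \<in> {0..(N - 1) div q}" using n unfolding f_def by simp
  qed
  have "card S = card (f ` S)" using inj card_image by fastforce
  also have "\<dots> \<le> card {0..(N - 1) div q}" using img card_mono by blast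
  also have "\<dots> = nat ((N - 1) div q + 1)" by simp
  finally have c0: "card S \<le> nat ((N - 1) div q + 1)" .
  have "N \<ge> 1" using mS assms(1) by auto
  then have "(N - 1) div q \<ge> 0" using assms(2) by (simp add: pos_imp_zdiv_nonneg_iff)
  then have "real (nat ((N - 1) div q + 1)) = real_of_int ((N - 1) div q + 1)" by simp
  then have c: "real (card S) \<le> real_of_int ((N - 1) div q + 1)"
    using c0 by (metis of_nat_le_iff)
  have "real_of_int ((N - 1) div q) \<le> real_of_int (N-1) / real_of_int q" by (rule real_of_int_div4)
  also have "\<dots> \<le> real_of_int N / real_of_int q" using assms(2) by (simp add: divide_right_mono)
  finally show ?thesis using c by simp
qed

lemma inv_sq_step: "(t::real) \<ge> 2 \<Longrightarrow> 1 / t^2 \<le> 1/(t-1) - 1/t"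
  by (simp add: field_simps power2_eq_square)

lemma sum_inv_sq_nat:
  assumes "(c::nat) \<ge> 2"
  shows "(\<Sum>m\<in>{c..<c+j}. 1/(real m)^2) \<le> 1/(real c - 1) - 1/(real (c+j) - 1)"
proof (induction j)
  case 0 then show ?case by simp
next
  case (Suc j)
  have "(\<Sum>m\<in>{c..<c+Suc j}. 1/(real m)^2) = (\<Sum>m\<in>{c..<c+j}. 1/(real m)^2) + 1/(real (c+j))^2"
    by simp
  also have "\<dots> \<le> 1/(real c - 1) - 1/(real (c+j) - 1) + (1/(real (c+j) - 1) - 1/real (c+j))"
    using Suc inv_sq_step[of "real (c+j)"] assms by simp
  finally show ?case by simp
qed

lemma sum_inv_sq_set:
  fixes P :: "int set" and c :: int
  assumes "finite P" "\<forall>p\<in>P. c \<le> p" "c \<ge> 2"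
  shows "(\<Sum>p\<in>P. 1/(real_of_int p)^2) \<le> 1/(real_of_int c - 1)"
proof (cases "P = {}")
  case True then show ?thesis using assms by simp
next
  case False
  have inj: "inj_on nat P" proof (rule inj_onI)
    fix u v assume "u \<in> P" "v \<in> P" "nat u = nat v"
    then show "u = v" using assms by (metis eq_nat_nat_iff order_trans zero_le_numeral)
  qed
  have "(\<Sum>p\<in>P. 1/(real_of_int p)^2) = (\<Sum>m\<in>nat ` P. 1/(real m)^2)"
    using assms by (simp add: sum.reindex[OF inj]) (intro sum.cong; force)
  also have "\<dots> \<le> (\<Sum>m\<in>{nat c..<nat c + (Max (nat ` P) + 1)}. 1/(real m)^2)"
  proof (rule sum_mono2)
    show "nat ` P \<subseteq> {nat c..<nat c + (Max (nat ` P) + 1)}"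
    proof
      fix m assume mP: "m \<in> nat ` P"
      then obtain p where "p \<in> P" "m = nat p" by auto
      then have "nat c \<le> m" using assms(2) nat_mono by blast
      moreover have "m \<le> Max (nat ` P)" using mP assms(1) by simp
      ultimately show "m \<in> {nat c..<nat c + (Max (nat ` P) + 1)}" by simp
    qed
  qed auto
  also have "\<dots> \<le> 1/(real (nat c) - 1) - 1/(real (nat c + (Max (nat ` P) + 1)) - 1)"
    by (rule sum_inv_sq_nat) (use assms in auto)
  also have "\<dots> \<le> 1/(real (nat c) - 1)" by simp
  also have "\<dots> = 1/(real_of_int c - 1)" using assms by simp
  finally show ?thesis .
qed

theorem proposition3p5:
  fixes \<Sigma> :: "int set" and k :: nat and a b :: "nat \<Rightarrow> int" and x z :: real
  assumes "finite \<Sigma>" and "\<forall>p\<in>\<Sigma>. prime p"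
    and "k \<ge> 1"
    and "\<forall>i\<in>{1..k}. a i \<noteq> 0"
    and "\<forall>i\<in>{1..k}. gcd (a i) (b i) = 1"
    and "\<forall>i\<in>{1..k}. \<forall>j\<in>{1..k}. i < j \<longrightarrow> a i * b j - a j * b i \<noteq> 0"
    and "sigma_unit \<Sigma> (fact (2 * k) * (\<Prod>i\<in>{1..k}. a i) *
           (\<Prod>i\<in>{1..k}. \<Prod>j\<in>{i<..k}. a i * b j - a j * b i))"
    and "2 \<le> z" and "z \<le> x"
  shows "real (card {n \<in> Omega \<Sigma> k a b x z. \<exists>i\<in>{1..k}. \<not> sigma_squarefree \<Sigma> (a i * n + b i)})
     \<le> real k * real_of_int (Max ((\<lambda>i. \<bar>a i\<bar>) ` {1..k} \<union> (\<lambda>i. \<bar>b i\<bar>) ` {1..k})) * (x + 1) / (z - 1)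
       + real k * sqrt (real_of_int (Max ((\<lambda>i. \<bar>a i\<bar>) ` {1..k} \<union> (\<lambda>i. \<bar>b i\<bar>) ` {1..k})) * x
                        + real_of_int (Max ((\<lambda>i. \<bar>a i\<bar>) ` {1..k} \<union> (\<lambda>i. \<bar>b i\<bar>) ` {1..k})))"
  proof -
  note a0 = assms(4) and su = assms(7)
  define M where "M = Max ((\<lambda>i. \<bar>a i\<bar>) ` {1..k} \<union> (\<lambda>i. \<bar>b i\<bar>) ` {1..k})"
  define s where "s = sqrt (real_of_int M * x + real_of_int M)"
  define Om where "Om = Omega \<Sigma> k a b x z"
  have Mab: "\<bar>a i\<bar> \<le> M \<and> \<bar>b i\<bar> \<le> M" if "i \<in> {1..k}" for i
    unfolding M_def using that by (intro conjI Max_ge) auto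
  have M1: "M \<ge> 1"
  proof -
    have 1: "(1::nat) \<in> {1..k}" using assms(3) by simp
    have "a 1 \<noteq> 0" "\<bar>a 1\<bar> \<le> M" using Mab[OF 1] a0 1 by auto
    then show ?thesis by linarith
  qed
  have x2: "x \<ge> 2" using assms(8,9) by simp
  have s1: "s \<ge> 1" unfolding s_def
  proof -
    have "0 \<le> real_of_int M * x" using M1 x2 by simp
    moreover have "1 \<le> real_of_int M" using M1 by simp
    ultimately have "1 \<le> real_of_int M * x + real_of_int M" by linarith
    then show "1 \<le> sqrt (real_of_int M * x + real_of_int M)" by simp
  qed
  have OmSub: "Om \<subseteq> {1..\<lfloor>x\<rfloor>}" unfolding Om_def Omega_def by (auto simp: le_floor_iff)
  have finOm: "finite Om" using OmSub finite_subset by blast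
  define B where "B i = {n \<in> Om. \<not> sigma_squarefree \<Sigma> (a i * n + b i)}" for i
  have per: "real (card (B i)) \<le> x / (z - 1) + s" if i: "i \<in> {1..k}" for i
  proof -
    define L where "L n = a i * n + b i" for n
    define Z where "Z = {n \<in> Om. L n = 0}"
    define PP where "PP = {p::int. prime p \<and> p \<notin> \<Sigma> \<and> z \<le> real_of_int p \<and> real_of_int p \<le> s}"
    define C where "C p = {n \<in> Om. p^2 dvd L n}" for p
    have ai: "a i \<noteq> 0" using a0 i by blast
    have finZ: "finite Z" using finOm unfolding Z_def by simp
    have cZ: "card Z \<le> 1"
    proof -
      have "\<forall>n1\<in>Z. \<forall>n2\<in>Z. n1 = n2"
      proof (intro ballI)
        fix n1 n2 assume "n1 \<in> Z" "n2 \<in> Z"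
        then have "a i * n1 + b i = 0" "a i * n2 + b i = 0" unfolding Z_def L_def by auto
        then have "a i * n1 = a i * n2" by linarith
        then show "n1 = n2" using ai by simp
      qed
      then show ?thesis using card_le_Suc0_iff_eq[OF finZ] by simp
    qed
    have PPsub: "PP \<subseteq> {2..\<lfloor>s\<rfloor>}" unfolding PP_def
      by (auto simp: le_floor_iff prime_ge_2_int)
    have finPP: "finite PP" using PPsub finite_subset by blast
    have cPP: "real (card PP) \<le> s - 1"
    proof -
      have "card PP \<le> card {2..\<lfloor>s\<rfloor>}" using PPsub card_mono by blast
      also have "\<dots> = nat (\<lfloor>s\<rfloor> - 1)" by simp
      finally have "real (card PP) \<le> real (nat (\<lfloor>s\<rfloor> - 1))" by simp
      also have "\<dots> = real_of_int \<lfloor>s\<rfloor> - 1" using s1 by (simp add: le_floor_iff)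
      also have "\<dots> \<le> s - 1" by simp
      finally show ?thesis .
    qed
    have pa: "\<not> p dvd a i" if "prime p" "p \<notin> \<Sigma>" for p
    proof
      assume "p dvd a i"
      moreover have "a i dvd (\<Prod>i\<in>{1..k}. a i)" using i by (intro dvd_prodI) auto
      ultimately have "p dvd fact (2 * k) * (\<Prod>i\<in>{1..k}. a i) *
           (\<Prod>i\<in>{1..k}. \<Prod>j\<in>{i<..k}. a i * b j - a j * b i)"
        by (meson dvd_mult dvd_mult2 dvd_trans)
      then show False using su that unfolding sigma_unit_def by blast
    qed
    have cC: "real (card (C p)) \<le> x / (real_of_int p)^2 + 1" if p: "p \<in> PP" for p
    proof -
      have pp: "prime p" "p \<notin> \<Sigma>" using p unfolding PP_def by auto
      have cop: "coprime (p^2) (a i)"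
        using pa[OF pp] pp(1) by (simp add: prime_imp_coprime)
      have "real (card (C p)) \<le> real_of_int \<lfloor>x\<rfloor> / real_of_int (p^2) + 1"
      proof (rule card_cong_le)
        show "C p \<subseteq> {1..\<lfloor>x\<rfloor>}" using OmSub unfolding C_def by auto
        show "p^2 > 0" using pp(1) prime_gt_0_int by simp
        show "0 \<le> \<lfloor>x\<rfloor>" using x2 by simp
        show "\<forall>n\<in>C p. \<forall>n'\<in>C p. p^2 dvd (n - n')"
        proof (intro ballI)
          fix n n' assume "n \<in> C p" "n' \<in> C p"
          then have "p^2 dvd L n - L n'" unfolding C_def by (simp add: dvd_diff)
          then have "p^2 dvd a i * (n - n')" unfolding L_def by (simp add: algebra_simps)
          then show "p^2 dvd (n - n')" using cop coprime_dvd_mult_right_iff by blast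
        qed
      qed
      also have "\<dots> \<le> x / (real_of_int p)^2 + 1"
        using pp(1) prime_gt_0_int[of p] by (simp add: divide_right_mono)
      finally show ?thesis .
    qed
    have incl: "B i \<subseteq> Z \<union> (\<Union>p\<in>PP. C p)"
    proof
      fix n assume nB: "n \<in> B i"
      then have nO: "n \<in> Om" and ns: "\<not> sigma_squarefree \<Sigma> (L n)"
        unfolding B_def L_def by auto
      show "n \<in> Z \<union> (\<Union>p\<in>PP. C p)"
      proof (cases "L n = 0")
        case True then show ?thesis using nO unfolding Z_def by auto
      next
        case False
        obtain p :: int where p: "prime p" "p^2 dvd L n" "p \<notin> \<Sigma>"
          using sqfree_crit[of "L n" \<Sigma>] ns by blast
        have n1: "1 \<le> n" "real_of_int n \<le> x"
          and g: "gcd (\<Prod>i\<in>{1..k}. a i * n + b i) (P_sigma \<Sigma> z) = 1"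
          using nO unfolding Om_def Omega_def by auto
        have pz: "z \<le> real_of_int p"
        proof (rule ccontr)
          assume "\<not> z \<le> real_of_int p"
          then have mem: "p \<in> {p::int. prime p \<and> real_of_int p < z \<and> p \<notin> \<Sigma>}" using p by auto
          have fin: "finite {p::int. prime p \<and> real_of_int p < z \<and> p \<notin> \<Sigma>}"
          proof (rule finite_subset)
            show "{p::int. prime p \<and> real_of_int p < z \<and> p \<notin> \<Sigma>} \<subseteq> {0..\<lceil>z\<rceil>}"
              by (auto simp: prime_ge_0_int) (meson ceiling_correct le_of_int_ceiling less_le_trans not_less of_int_le_iff order.strict_implies_order)
          qed simp
          have "p dvd P_sigma \<Sigma> z" unfolding P_sigma_def using dvd_prodI[OF fin mem] by simp
          moreover have "p dvd L n" using p(2) by (meson dvd_power dvd_trans pos2)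
          then have "p dvd (\<Prod>i\<in>{1..k}. a i * n + b i)"
            using i unfolding L_def by (meson dvd_prodI dvd_trans finite_atLeastAtMost)
          ultimately have "p dvd 1" using g by (metis gcd_greatest)
          then show False using p(1) not_prime_unit by blast
        qed
        have "(real_of_int p)^2 \<le> real_of_int \<bar>L n\<bar>"
        proof -
          have "p^2 \<le> \<bar>L n\<bar>" 
          proof -
            have "p^2 dvd \<bar>L n\<bar>" using p(2) by simp
            moreover have "0 < \<bar>L n\<bar>" using False by simp
            ultimately show ?thesis by (rule zdvd_imp_le)
          qed
          then show ?thesis by (metis of_int_le_iff of_int_power)
        qed
        also have "\<dots> \<le> real_of_int \<bar>a i\<bar> * real_of_int n + real_of_int \<bar>b i\<bar>"
        proof -
          have "\<bar>L n\<bar> \<le> \<bar>a i * n\<bar> + \<bar>b i\<bar>" unfolding L_def by (rule abs_triangle_ineq)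
          moreover have "\<bar>a i * n\<bar> = \<bar>a i\<bar> * n" using n1 by (simp add: abs_mult)
          ultimately have "\<bar>L n\<bar> \<le> \<bar>a i\<bar> * n + \<bar>b i\<bar>" by simp
          then show ?thesis by (metis of_int_add of_int_le_iff of_int_mult)
        qed
        also have "\<dots> \<le> real_of_int M * x + real_of_int M"
        proof -
          have "real_of_int \<bar>a i\<bar> * real_of_int n \<le> real_of_int M * x"
            using Mab[OF i] n1 by (intro mult_mono) auto
          moreover have "real_of_int \<bar>b i\<bar> \<le> real_of_int M" using Mab[OF i] by (simp only: of_int_le_iff)
          ultimately show ?thesis by linarith
        qed
        finally have "real_of_int p \<le> s" unfolding s_def by (rule real_le_rsqrt)
        then have "p \<in> PP" unfolding PP_def using p pz by auto
        then show ?thesis using nO p(2) unfolding C_def by auto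
      qed
    qed
    have finB: "finite (B i)" using finOm unfolding B_def by simp
    have "real (card (B i)) \<le> real (card (Z \<union> (\<Union>p\<in>PP. C p)))"
      using card_mono[OF _ incl] finZ finPP finOm unfolding C_def by simp
    also have "\<dots> \<le> real (card Z + card (\<Union>p\<in>PP. C p))"
      using card_Un_le by (metis of_nat_le_iff)
    also have "\<dots> \<le> real (card Z + (\<Sum>p\<in>PP. card (C p)))"
      using card_UN_le[OF finPP, of C] by (simp only: of_nat_le_iff add_le_mono1)
    also have "\<dots> \<le> 1 + (\<Sum>p\<in>PP. (x / (real_of_int p)^2 + 1))"
    proof -
      have "(\<Sum>p\<in>PP. real (card (C p))) \<le> (\<Sum>p\<in>PP. (x / (real_of_int p)^2 + 1))"
        using cC by (intro sum_mono) auto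
      moreover have "real (card Z) \<le> 1" using cZ by simp
      ultimately show ?thesis by simp
    qed
    also have "\<dots> = 1 + real (card PP) + x * (\<Sum>p\<in>PP. 1 / (real_of_int p)^2)"
      by (simp add: sum.distrib sum_distrib_left)
    also have "\<dots> \<le> 1 + (s - 1) + x * (1 / (z - 1))"
    proof -
      have "(\<Sum>p\<in>PP. 1 / (real_of_int p)^2) \<le> 1 / (real_of_int \<lceil>z\<rceil> - 1)"
      proof (rule sum_inv_sq_set[OF finPP])
        show "\<forall>p\<in>PP. \<lceil>z\<rceil> \<le> p" unfolding PP_def by (auto simp: ceiling_le_iff)
        show "2 \<le> \<lceil>z\<rceil>" using assms(8) by (simp add: le_ceiling_iff)
      qed
      also have "\<dots> \<le> 1 / (z - 1)" using assms(8)
        by (intro divide_left_mono) (auto simp: le_of_int_ceiling)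
      finally have "x * (\<Sum>p\<in>PP. 1 / (real_of_int p)^2) \<le> x * (1 / (z - 1))"
        using x2 by (intro mult_left_mono) auto
      then show ?thesis using cPP by simp
    qed
    finally show ?thesis by simp
  qed
  have Bad: "{n \<in> Om. \<exists>i\<in>{1..k}. \<not> sigma_squarefree \<Sigma> (a i * n + b i)} = (\<Union>i\<in>{1..k}. B i)"
    unfolding B_def by auto
  have "real (card {n \<in> Om. \<exists>i\<in>{1..k}. \<not> sigma_squarefree \<Sigma> (a i * n + b i)})
        \<le> real (\<Sum>i\<in>{1..k}. card (B i))"
    unfolding Bad using card_UN_le[of "{1..k}" B] by (simp only: of_nat_le_iff) simp
  also have "\<dots> = (\<Sum>i\<in>{1..k}. real (card (B i)))" by simp
  also have "\<dots> \<le> (\<Sum>i\<in>{1..k}. x / (z - 1) + s)" by (rule sum_mono) (use per in auto)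
  also have "\<dots> = real k * (x / (z - 1)) + real k * s" by (simp add: algebra_simps)
  also have "\<dots> \<le> real k * real_of_int M * (x + 1) / (z - 1) + real k * s"
  proof -
    have "1 * (x + 1) \<le> real_of_int M * (x + 1)" using M1 x2
      by (intro mult_right_mono) auto
    then have "x \<le> real_of_int M * (x + 1)" by simp
    then have "x / (z - 1) \<le> real_of_int M * (x + 1) / (z - 1)"
      using assms(8) by (intro divide_right_mono) auto
    then have "real k * (x / (z - 1)) \<le> real k * (real_of_int M * (x + 1) / (z - 1))"
      by (intro mult_left_mono) auto
    then show ?thesis by simp
  qed
  finally show ?thesis unfolding M_def s_def Om_def .
qed

end
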